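(* Let $\mathcal{F}$ be a finite subcollection of $\mathcal{M}(\mathbb{D})$. Then every composition sequence generated by $\mathcal{F}$ that is of limit-disc type is also of limit-tangent type.
   Context: $\mathbb{D}$ is the open unit disc in $\mathbb{C}$. A Möbius transformation is a map $z\mapsto (az+b)/(cz+d)$ with $a,b,c,d\in\mathbb{C}$, $ad-bc\neq 0$, acting on $\overline{\mathbb{C}}=\mathbb{C}\cup\{\infty\}$. $\mathcal{M}(\mathbb{D})$ denotes the set of Möbius transformations $f$ with $f(\mathbb{D})\subset\mathbb{D}$ and $f(\mathbb{D})\neq\mathbb{D}$. Given a collection $\mathcal{F}$ of maps, a composition sequence generated by $\mathcal{F}$ is a sequence $(F_n)$ with $F_n=f_1f_2\cdots f_n$ (composition), where each $f_i\in\mathcal{F}$. For such a sequence with $\mathcal{F}\subset\mathcal{M}(\mathbb{D})$, the discs $\mathbb{D}\supset F_1(\mathbb{D})\supset F_2(\mathbb{D})\supset\cdots$ are nested, and $\bigcap_n F_n(\overline{\mathbb{D}})$ is either a single point (the sequence is then of limit-point type) or a closed disc of positive radius (the sequence is then of limit-disc type). The sequence is of limit-tangent type if all but finitely many of the discs in $\mathbb{D}\supset F_1(\mathbb{D})\supset F_2(\mathbb{D})\supset\cdots$ share a single common boundary point. *)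

theory Defs
  imports "HOL-Analysis.Analysis"
begin

text \<open>A Moebius transformation z \<mapsto> (a z + b)/(c z + d) is represented by its
coefficient quadruple (a, b, c, d) with a d - b c \<noteq> 0.\<close>

type_synonym mobius = "complex \<times> complex \<times> complex \<times> complex"

definition mob_apply :: "mobius \<Rightarrow> complex \<Rightarrow> complex" where
  "mob_apply m z = (case m of (a, b, c, d) \<Rightarrow> (a * z + b) / (c * z + d))"

definition mob_nondeg :: "mobius \<Rightarrow> bool" where
  "mob_nondeg m = (case m of (a, b, c, d) \<Rightarrow> a * d - b * c \<noteq> 0)"

definition mob_pole_free_on :: "mobius \<Rightarrow> complex set \<Rightarrow> bool" where
  "mob_pole_free_on m S = (case m of (a, b, c, d) \<Rightarrow> (\<forall>z\<in>S. c * z + d \<noteq> 0))"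

definition MD :: "mobius set" where
  "MD = {m. mob_nondeg m \<and> mob_pole_free_on m (ball 0 1)
            \<and> mob_apply m ` ball 0 1 \<subseteq> ball 0 1
            \<and> mob_apply m ` ball 0 1 \<noteq> ball 0 1}"

text \<open>Composition sequence: comp_seq f n = f_0 \<circ> f_1 \<circ> ... \<circ> f_(n-1)
(so comp_seq f n is F_n in the paper, with indices shifted by one).\<close>
primrec comp_seq :: "(nat \<Rightarrow> mobius) \<Rightarrow> nat \<Rightarrow> complex \<Rightarrow> complex" where
  "comp_seq f 0 = id"
| "comp_seq f (Suc n) = comp_seq f n \<circ> mob_apply (f n)"

definition limit_disc_type :: "(nat \<Rightarrow> mobius) \<Rightarrow> bool" where
  "limit_disc_type f =
     (\<exists>c r. r > 0 \<and> (\<Inter>n\<in>{1..}. comp_seq f n ` cball 0 1) = cball c r)"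

definition limit_tangent_type :: "(nat \<Rightarrow> mobius) \<Rightarrow> bool" where
  "limit_tangent_type f =
     (\<exists>p N. \<forall>n\<ge>N. p \<in> frontier (comp_seq f n ` ball 0 1))"

end

theory Submission imports Defs "HOL-Complex_Analysis.Complex_Analysis" begin

lemma mob_apply_eq: "mob_apply (a,b,c,d) z = (a*z+b)/(c*z+d)"
  by (simp add: mob_apply_def)

lemma cm1: "t \<le> 1 \<Longrightarrow> cmod (1 - complex_of_real t) = 1 - t"
  by (metis of_real_1 of_real_diff norm_of_real abs_of_nonneg diff_ge_0_iff_ge)

lemma MD_D:
  assumes "(a,b,c,d) \<in> MD"
  shows "a*d - b*c \<noteq> 0" "\<And>z. cmod z < 1 \<Longrightarrow> c*z+d \<noteq> 0"
    "\<And>z. cmod z < 1 \<Longrightarrow> cmod ((a*z+b)/(c*z+d)) < 1"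
    "(\<lambda>z. (a*z+b)/(c*z+d)) ` ball 0 1 \<noteq> ball 0 1"
  using assms unfolding MD_def mob_nondeg_def mob_pole_free_on_def mob_apply_def
  by (auto simp: image_subset_iff)

lemma MD_pole:
  assumes m: "(a,b,c,d) \<in> MD" and z: "cmod z \<le> 1"
  shows "c*z+d \<noteq> 0"
proof
  assume cz: "c*z+d = 0"
  have z1: "cmod z = 1" using MD_D(2)[OF m, of z] cz z by force
  have c0: "c \<noteq> 0" using MD_D(1)[OF m] cz by auto
  have ab: "a*z+b \<noteq> 0"
  proof
    assume "a*z+b = 0"
    then have "a*d - b*c = a*(-c*z) - (-a*z)*c" using cz
      by (metis add_eq_0_iff minus_mult_left)
    also have "\<dots> = 0" by (simp add: algebra_simps)
    finally show False using MD_D(1)[OF m] by simp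
  qed
  define e where "e = cmod (a*z+b)"
  have e: "e > 0" using ab by (simp add: e_def)
  have key: "e < (cmod a + cmod c) * (1 - t)" if t: "0 \<le> t" "t < 1" for t
  proof -
    have tz: "cmod (of_real t * z) < 1" using t z1 by (simp add: norm_mult)
    have den: "c * (of_real t * z) + d = - (c*z) * of_real (1 - t)"
      using cz by (simp add: algebra_simps)
    have dn0: "c * (of_real t * z) + d \<noteq> 0" using MD_D(2)[OF m tz] .
    have "cmod (a*(of_real t*z)+b) < cmod (c * (of_real t * z) + d)"
      using MD_D(3)[OF m tz] dn0 by (simp add: norm_divide divide_less_eq)
    also have "\<dots> = cmod c * (1 - t)" using den z1 t by (simp add: norm_mult cm1)
    finally have 1: "cmod (a*(of_real t*z)+b) < cmod c * (1 - t)" .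
    have "a*z+b = (a*(of_real t*z)+b) + a*z* of_real(1-t)" by (simp add: algebra_simps)
    then have "e \<le> cmod (a*(of_real t*z)+b) + cmod (a*z* of_real(1-t))"
      unfolding e_def by (metis norm_triangle_ineq)
    also have "cmod (a*z* of_real(1-t)) = cmod a * (1-t)" using z1 t by (simp add: norm_mult cm1)
    finally show ?thesis using 1 by (simp add: algebra_simps)
  qed
  define t where "t = max 0 (1 - e / (cmod a + cmod c))"
  have ac: "cmod a + cmod c > 0" using c0 by (simp add: add_nonneg_pos)
  have "t < 1" using e ac by (simp add: t_def)
  from key[OF _ this] have "e < (cmod a + cmod c) * (1 - t)" by (simp add: t_def)
  moreover have "(cmod a + cmod c) * (1 - t) \<le> e"
  proof (cases "1 - e / (cmod a + cmod c) \<le> 0")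
    case True then have "t = 0" by (simp add: t_def)
    then show ?thesis using True ac by (simp add: field_simps)
  next
    case False then have "t = 1 - e / (cmod a + cmod c)" by (simp add: t_def)
    then show ?thesis using ac by simp
  qed
  ultimately show False by simp
qed


definition U :: "mobius \<Rightarrow> complex set" where
  "U m = {z. case m of (a,b,c,d) \<Rightarrow> c*z+d \<noteq> 0}"

lemma U_eq: "U (a,b,c,d) = {z. c*z+d \<noteq> 0}" by (simp add: U_def)

lemma open_U: "open (U m)"
proof -
  obtain a b c d where m: "m = (a,b,c,d)" by (cases m) auto
  have "open {z. c*z+d \<noteq> 0}"
    by (rule open_Collect_neq) (auto intro!: continuous_intros)
  then show ?thesis by (simp add: m U_eq)
qed

lemma hol_U: "mob_apply m holomorphic_on U m"
proof -
  obtain a b c d where m: "m = (a,b,c,d)" by (cases m) auto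
  show ?thesis unfolding m U_eq mob_apply_def
    by (auto intro!: holomorphic_intros)
qed

lemma inj_U: assumes "mob_nondeg m" shows "inj_on (mob_apply m) (U m)"
proof -
  obtain a b c d where m: "m = (a,b,c,d)" by (cases m) auto
  have det: "a*d - b*c \<noteq> 0" using assms by (simp add: m mob_nondeg_def)
  show ?thesis unfolding inj_on_def m U_eq mob_apply_eq
  proof (intro ballI impI)
    fix x y assume x: "x \<in> {z. c*z+d \<noteq> 0}" and y: "y \<in> {z. c*z+d \<noteq> 0}"
      and e: "(a*x+b)/(c*x+d) = (a*y+b)/(c*y+d)"
    then have "(a*x+b)*(c*y+d) = (a*y+b)*(c*x+d)" by (simp add: divide_simps)
    then have "(a*d - b*c)*(x - y) = 0" by (simp add: algebra_simps)
    then show "x = y" using det by simp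
  qed
qed

lemma MD_nondeg: "m \<in> MD \<Longrightarrow> mob_nondeg m" by (simp add: MD_def)

lemma MD_cball_U: assumes "m \<in> MD" shows "cball 0 1 \<subseteq> U m"
proof -
  obtain a b c d where m: "m = (a,b,c,d)" by (cases m) auto
  show ?thesis using MD_pole[of a b c d] assms by (auto simp: m U_eq)
qed

lemma MD_lt1: assumes "m \<in> MD" "cmod z < 1" shows "cmod (mob_apply m z) < 1"
proof -
  obtain a b c d where m: "m = (a,b,c,d)" by (cases m) auto
  show ?thesis using MD_D(3)[of a b c d z] assms by (simp add: m mob_apply_eq)
qed

lemma MD_le1: assumes m: "m \<in> MD" and z: "cmod z \<le> 1" shows "cmod (mob_apply m z) \<le> 1"
proof -
  have cont: "continuous_on (closure (ball 0 1)) (mob_apply m)"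
    using holomorphic_on_imp_continuous_on[OF hol_U] MD_cball_U[OF m]
    by (metis closure_ball continuous_on_subset zero_less_one)
  have "mob_apply m ` closure (ball 0 1) \<subseteq> cball 0 1"
  proof (rule image_closure_subset[OF cont])
    show "mob_apply m ` ball 0 1 \<subseteq> cball 0 1"
    proof
      fix y assume "y \<in> mob_apply m ` ball 0 1"
      then obtain x where x: "cmod x < 1" "y = mob_apply m x" by auto
      have "cmod (mob_apply m x) < 1" by (rule MD_lt1[OF m x(1)])
      then show "y \<in> cball 0 1" using x by simp
    qed
  qed simp
  moreover have "z \<in> closure (ball 0 1)" using z by simp
  ultimately have "mob_apply m z \<in> cball 0 1" by blast
  then show ?thesis by simp
qed


primrec Vs :: "(nat \<Rightarrow> mobius) \<Rightarrow> nat \<Rightarrow> complex set" where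
  "Vs f 0 = UNIV"
| "Vs f (Suc n) = U (f n) \<inter> mob_apply (f n) -` Vs f n"

lemma comp_seq_Suc_apply: "comp_seq f (Suc n) z = comp_seq f n (mob_apply (f n) z)"
  by simp

lemma comp_seq_ball: assumes "\<And>n. f n \<in> MD" and "cmod z < 1"
  shows "cmod (comp_seq f n z) < 1"
  using assms(2) by (induction n arbitrary: z) (auto intro: MD_lt1[OF assms(1)])

lemma comp_seq_cball: assumes "\<And>n. f n \<in> MD" and "cmod z \<le> 1"
  shows "cmod (comp_seq f n z) \<le> 1"
  using assms(2) by (induction n arbitrary: z) (auto intro: MD_le1[OF assms(1)])

lemma Vs_props: assumes hf: "\<And>n. f n \<in> MD"
  shows "open (Vs f n) \<and> cball 0 1 \<subseteq> Vs f n \<and> comp_seq f n holomorphic_on Vs f n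
          \<and> inj_on (comp_seq f n) (Vs f n)"
proof (induction n)
  case 0 then show ?case by (simp add: id_def)
next
  case (Suc n)
  then have o: "open (Vs f n)" and c: "cball 0 1 \<subseteq> Vs f n"
    and h: "comp_seq f n holomorphic_on Vs f n" and i: "inj_on (comp_seq f n) (Vs f n)" by auto
  have "open (U (f n) \<inter> mob_apply (f n) -` Vs f n)"
    by (rule continuous_open_preimage[OF holomorphic_on_imp_continuous_on[OF hol_U] open_U o])
  moreover have "cball 0 1 \<subseteq> Vs f (Suc n)"
  proof
    fix x :: complex assume x: "x \<in> cball 0 1"
    have "mob_apply (f n) x \<in> cball 0 1" using MD_le1[OF hf] x by simp
    then have "mob_apply (f n) x \<in> Vs f n" using c by blast
    moreover have "x \<in> U (f n)" using MD_cball_U[OF hf] x by blast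
    ultimately show "x \<in> Vs f (Suc n)" by simp
  qed
  moreover have "comp_seq f (Suc n) holomorphic_on Vs f (Suc n)"
    unfolding comp_seq.simps
    by (rule holomorphic_on_compose_gen[where t = "Vs f n"])
       (auto intro: holomorphic_on_subset[OF hol_U] h)
  moreover have "inj_on (comp_seq f (Suc n)) (Vs f (Suc n))"
    unfolding comp_seq.simps
    by (rule comp_inj_on) (auto intro: inj_on_subset[OF inj_U[OF MD_nondeg[OF hf]]] inj_on_subset[OF i])
  ultimately show ?case unfolding Vs.simps comp_seq.simps by blast
qed


lemma interior_image:
  assumes hf: "\<And>n. f n \<in> MD"
  shows "interior (comp_seq f n ` cball 0 1) \<subseteq> comp_seq f n ` ball 0 1"
proof
  fix y assume y: "y \<in> interior (comp_seq f n ` cball 0 1)"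
  define F where "F = comp_seq f n"
  define V where "V = Vs f n"
  have oV: "open V" and cV: "cball 0 1 \<subseteq> V" and hV: "F holomorphic_on V" and iV: "inj_on F V"
    using Vs_props[OF hf, where n=n] by (auto simp: F_def V_def)
  obtain e where e: "e > 0" "ball y e \<subseteq> F ` cball 0 1" using y by (auto simp: mem_interior F_def)
  have "y \<in> F ` cball 0 1" using y interior_subset F_def by blast
  then obtain w where w: "cmod w \<le> 1" "y = F w" by auto
  show "y \<in> comp_seq f n ` ball 0 1"
  proof (cases "cmod w < 1")
    case True then show ?thesis using w F_def by auto
  next
    case False
    then have w1: "cmod w = 1" using w by simp
    have wV: "w \<in> V" using cV w by auto
    have "isCont F w"
      using continuous_on_eq_continuous_at[OF oV] holomorphic_on_imp_continuous_on[OF hV] wV by blast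
    then obtain d1 where d1: "d1 > 0" "F ` ball w d1 \<subseteq> ball (F w) e"
      using e(1) unfolding continuous_at_ball by blast
    obtain d2 where d2: "d2 > 0" "ball w d2 \<subseteq> V" using oV wV open_contains_ball by blast
    define d where "d = min d1 d2"
    define x where "x = of_real (1 + d/2) * w"
    have d: "d > 0" using d1 d2 by (simp add: d_def)
    have xw: "x - w = of_real (d/2) * w" by (simp add: x_def algebra_simps)
    have "dist w x = cmod (x - w)" by (simp add: dist_norm norm_minus_commute)
    also have "\<dots> = d/2" using w1 d unfolding xw norm_mult norm_of_real by simp
    finally have dx: "dist w x = d/2" .
    then have xb1: "x \<in> ball w d1" "x \<in> ball w d2" using d by (auto simp: d_def)
    have "F x \<in> F ` ball w d1" using xb1(1) by blast
    then have "F x \<in> ball y e" using d1(2) w(2) by blast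
    then obtain u where u: "cmod u \<le> 1" "F x = F u" using e by auto
    have "u \<in> cball 0 1" using u by simp
    then have "u \<in> V" using cV by blast
    moreover have "x \<in> V" using xb1(2) d2(2) by blast
    ultimately have "x = u" using iV u(2) by (meson inj_onD)
    moreover have "cmod x = 1 + d/2" using w1 d unfolding x_def norm_mult norm_of_real by simp
    ultimately show ?thesis using u d by simp
  qed
qed

lemma frontier_point:
  assumes hf: "\<And>n. f n \<in> MD" and w: "cmod w = 1"
  shows "comp_seq f n w \<in> frontier (comp_seq f n ` ball 0 1)"
proof -
  define F where "F = comp_seq f n"
  have cV: "cball 0 1 \<subseteq> Vs f n" and hV: "F holomorphic_on Vs f n" and iV: "inj_on F (Vs f n)"
    using Vs_props[OF hf, where n=n] by (auto simp: F_def)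
  have cont: "continuous_on (closure (ball 0 1)) F"
    using holomorphic_on_imp_continuous_on[OF hV] cV
    by (metis closure_ball continuous_on_subset zero_less_one)
  have "F ` closure (ball 0 1) \<subseteq> closure (F ` ball 0 1)"
    by (rule image_closure_subset[OF cont]) (auto intro: closure_subset[THEN subsetD])
  moreover have "w \<in> closure (ball 0 (1::real))" using w by simp
  ultimately have 1: "F w \<in> closure (F ` ball 0 1)" by blast
  have "F w \<notin> F ` ball 0 1"
  proof
    assume "F w \<in> F ` ball 0 1"
    then obtain u where u: "cmod u < 1" "F w = F u" by auto
    have "w \<in> cball 0 1" "u \<in> cball 0 1" using w u by auto
    then have "w \<in> Vs f n" "u \<in> Vs f n" using cV by blast+
    then have "w = u" using iV u(2) by (meson inj_onD)
    then show False using u w by simp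
  qed
  then have "F w \<notin> interior (F ` ball 0 1)" using interior_subset by blast
  with 1 show ?thesis by (simp add: frontier_def F_def)
qed




lemma cnj_mult_self: "cnj w * w = complex_of_real ((cmod w)^2)"
  by (metis complex_norm_square mult.commute of_real_power)

lemma aux_div: "X \<noteq> 0 \<Longrightarrow> ((1 - 0) * X - (w - w) * Y) / (X * X) = 1 / (X::complex)"
  by simp

lemma deriv_phi: "1 - cnj w * w \<noteq> 0 \<Longrightarrow>
   ((\<lambda>u. (u - w) / (1 - cnj w * u)) has_field_derivative 1/(1 - cnj w * w)) (at w)"
  apply (rule derivative_eq_intros refl)+
   apply assumption
  apply (erule aux_div)
  done

lemma deriv_psi: "((\<lambda>u. (u - (-z)) / (1 - cnj (-z) * u)) has_field_derivative (1 - cnj z * z)) (at 0)"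
  apply (rule derivative_eq_intros refl)+
  apply (auto simp: field_simps power2_eq_square)
  done

lemma schwarz_pick:
  assumes hol: "g holomorphic_on ball 0 1" and into: "\<And>z. cmod z < 1 \<Longrightarrow> cmod (g z) < 1"
    and z: "cmod z < 1"
  shows "cmod (deriv g z) * (1 - (cmod z)^2) \<le> 1 - (cmod (g z))^2"
proof -
  define w where "w = g z"
  have w: "cmod w < 1" using into z by (simp add: w_def)
  define \<phi> where "\<phi> = Moebius_function 0 w"
  define \<psi> where "\<psi> = Moebius_function 0 (-z)"
  define k where "k = \<phi> \<circ> g \<circ> \<psi>"
  have zb: "z \<in> ball 0 1" and wb: "w \<in> ball 0 1" using z w by auto
  have h\<phi>: "\<phi> holomorphic_on ball 0 1" unfolding \<phi>_def by (rule Moebius_function_holomorphic[OF w])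
  have h\<psi>: "\<psi> holomorphic_on ball 0 1" unfolding \<psi>_def by (rule Moebius_function_holomorphic) (use z in simp)
  have i\<psi>: "\<And>u. cmod u < 1 \<Longrightarrow> cmod (\<psi> u) < 1"
    unfolding \<psi>_def by (rule Moebius_function_norm_lt_1) (use z in simp)
  have i\<phi>: "\<And>u. cmod u < 1 \<Longrightarrow> cmod (\<phi> u) < 1"
    unfolding \<phi>_def by (rule Moebius_function_norm_lt_1[OF w])
  have hk: "k holomorphic_on ball 0 1"
    unfolding k_def
    by (rule holomorphic_on_compose_gen[OF h\<psi> _ ], rule holomorphic_on_compose_gen[OF hol h\<phi>])
       (use i\<psi> into in auto)
  have \<psi>0: "\<psi> 0 = z" by (simp add: \<psi>_def Moebius_function_simple)
  have k0: "k 0 = 0" by (simp add: k_def \<psi>0 \<phi>_def w_def Moebius_function_eq_zero)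
  have ik: "\<And>u. cmod u < 1 \<Longrightarrow> cmod (k u) < 1" using i\<phi> i\<psi> into by (simp add: k_def)
  have dk: "cmod (deriv k 0) \<le> 1" using Schwarz_Lemma(2)[OF hk k0 ik, of 0] by simp
  have wl: "(cmod w)^2 < 1" using w by (simp add: abs_square_less_1)
  have n1: "1 - cnj w * w \<noteq> 0"
  proof
    assume "1 - cnj w * w = 0"
    then have "complex_of_real ((cmod w)^2) = 1" by (simp add: cnj_mult_self)
    then have "(cmod w)^2 = 1" using of_real_eq_1_iff by blast
    then show False using wl by simp
  qed
  have d\<phi>: "(\<phi> has_field_derivative 1 / (1 - cnj w * w)) (at w)"
    using deriv_phi[OF n1] by (simp add: \<phi>_def Moebius_function_simple[abs_def])
  have d\<psi>: "(\<psi> has_field_derivative (1 - cnj z * z)) (at 0)"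
    using deriv_psi[of z] unfolding \<psi>_def Moebius_function_simple[abs_def] .
  have dg: "(g has_field_derivative deriv g z) (at z)"
    using hol zb by (meson holomorphic_derivI open_ball)
  have "(k has_field_derivative (1 / (1 - cnj w * w)) * deriv g z * (1 - cnj z * z)) (at 0)"
  proof -
    have dpg: "((\<lambda>x. \<phi> (g x)) has_field_derivative (1 / (1 - cnj w * w)) * deriv g z) (at (\<psi> 0))"
      using DERIV_chain2[OF d\<phi>[unfolded w_def] dg] \<psi>0 by (simp add: w_def)
    show ?thesis using DERIV_chain2[OF dpg d\<psi>] by (simp add: k_def o_def)
  qed
  then have "deriv k 0 = (1 / (1 - cnj w * w)) * deriv g z * (1 - cnj z * z)"
    by (rule DERIV_imp_deriv)
  then have "cmod (deriv k 0) = cmod (deriv g z) * (1 - (cmod z)^2) / (1 - (cmod w)^2)"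
  proof -
    have e1: "1 - cnj w * w = of_real (1 - (cmod w)^2)" by (simp add: cnj_mult_self)
    have e2: "1 - cnj z * z = of_real (1 - (cmod z)^2)" by (simp add: cnj_mult_self)
    have p1: "1 - (cmod w)^2 > 0" using w by (simp add: abs_square_less_1)
    have p2: "1 - (cmod z)^2 > 0" using z by (simp add: abs_square_less_1)
    assume "deriv k 0 = (1 / (1 - cnj w * w)) * deriv g z * (1 - cnj z * z)"
    then have "deriv k 0 = of_real (1 / (1 - (cmod w)^2)) * deriv g z * of_real (1 - (cmod z)^2)"
      unfolding e1 e2 by simp
    then have "cmod (deriv k 0) = \<bar>1 / (1 - (cmod w)^2)\<bar> * cmod (deriv g z) * \<bar>1 - (cmod z)^2\<bar>"
      by (simp only: norm_mult norm_of_real)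
    also have "\<dots> = cmod (deriv g z) * (1 - (cmod z)^2) / (1 - (cmod w)^2)"
      using p1 p2 by simp
    finally show ?thesis .
  qed
  with dk have "cmod (deriv g z) * (1 - (cmod z)^2) / (1 - (cmod w)^2) \<le> 1" by simp
  moreover have "1 - (cmod w)^2 > 0" using w by (simp add: abs_square_less_1)
  ultimately show ?thesis by (simp add: w_def divide_le_eq)
qed




lemma cmod_add_sq: "(cmod (x + y))^2 = (cmod x)^2 + (cmod y)^2 + 2 * Re (x * cnj y)"
  unfolding cmod_power2 by (simp add: power2_eq_square algebra_simps)

lemma re_eq_neg_cmod: "Re x = - cmod x \<Longrightarrow> x = of_real (- cmod x)"
proof -
  assume h: "Re x = - cmod x"
  have "(Im x)^2 = 0" using cmod_power2[of x] h by simp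
  then have "Im x = 0" by simp
  then show ?thesis using h by (simp add: complex_eq_iff)
qed

lemma surj_contra:
  assumes m: "m \<in> MD" and bd: "\<And>w. cmod w = 1 \<Longrightarrow> cmod (mob_apply m w) = 1"
  shows False
proof -
  define f where "f = mob_apply m"
  have hU: "f holomorphic_on U m" using hol_U by (simp add: f_def)
  have hb: "f holomorphic_on ball 0 1"
    using holomorphic_on_subset[OF hU] MD_cball_U[OF m] ball_subset_cball by blast
  have ib: "inj_on f (ball 0 1)"
    using inj_on_subset[OF inj_U[OF MD_nondeg[OF m]]] MD_cball_U[OF m] ball_subset_cball
    unfolding f_def by blast
  have op: "open (f ` ball 0 1)" by (rule open_mapping_thm3[OF hb open_ball ib])
  have cc: "continuous_on (cball 0 1) f"
    using holomorphic_on_imp_continuous_on[OF hU] MD_cball_U[OF m] continuous_on_subset by blast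
  have cp: "compact (f ` cball 0 1)" by (rule compact_continuous_image[OF cc compact_cball])
  have eq: "f ` ball 0 1 = ball 0 1 \<inter> f ` cball 0 1"
  proof
    show "f ` ball 0 1 \<subseteq> ball 0 1 \<inter> f ` cball 0 1"
      using MD_lt1[OF m] ball_subset_cball by (auto simp: f_def)
    show "ball 0 1 \<inter> f ` cball 0 1 \<subseteq> f ` ball 0 1"
    proof
      fix y assume "y \<in> ball 0 1 \<inter> f ` cball 0 1"
      then obtain u where u: "cmod u \<le> 1" "y = f u" "cmod y < 1" by auto
      have "cmod u \<noteq> 1" using bd u by (auto simp: f_def)
      then have "u \<in> ball 0 1" using u by simp
      then show "y \<in> f ` ball 0 1" using u by blast
    qed
  qed
  have "connected (ball (0::complex) 1)" by (rule connected_ball)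
  moreover have "openin (top_of_set (ball 0 1)) (f ` ball 0 1)"
    using op eq by (auto simp: openin_open)
  moreover have "closedin (top_of_set (ball 0 1)) (f ` ball 0 1)"
    using eq compact_imp_closed[OF cp] by (auto simp: closedin_closed)
  ultimately have "f ` ball 0 1 = {} \<or> f ` ball 0 1 = ball 0 1"
    unfolding connected_clopen by blast
  moreover have "f ` ball 0 1 \<noteq> {}" by simp
  ultimately have "f ` ball 0 1 = ball 0 1" by blast
  moreover obtain a b c d where mm: "m = (a,b,c,d)" by (cases m) auto
  ultimately show False using MD_D(4)[of a b c d] m by (simp add: f_def mm mob_apply_eq[abs_def])
qed

lemma tangent_unique:
  assumes m: "m \<in> MD" and w1: "cmod w1 = 1" "cmod (mob_apply m w1) = 1"
    and w2: "cmod w2 = 1" "cmod (mob_apply m w2) = 1"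
  shows "w1 = w2"
proof -
  obtain a b c d where mm: "m = (a,b,c,d)" by (cases m) auto
  have m': "(a,b,c,d) \<in> MD" using m mm by simp
  define K where "K = (cmod c)^2 + (cmod d)^2 - (cmod a)^2 - (cmod b)^2"
  define \<beta> where "\<beta> = c * cnj d - a * cnj b"
  have Hz: "(cmod (c*z+d))^2 - (cmod (a*z+b))^2 = K + 2 * Re (\<beta> * z)" if "cmod z = 1" for z
    using that by (simp add: cmod_add_sq K_def \<beta>_def norm_mult algebra_simps)
  have Hge: "K + 2 * Re (\<beta> * z) \<ge> 0" if z: "cmod z = 1" for z
  proof -
    have dz: "c*z+d \<noteq> 0" using MD_pole[OF m'] z by simp
    have "cmod ((a*z+b)/(c*z+d)) \<le> 1" using MD_le1[OF m] z by (simp add: mm mob_apply_eq)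
    then have "cmod (a*z+b) \<le> cmod (c*z+d)" using dz by (simp add: norm_divide divide_le_eq)
    then have "(cmod (a*z+b))^2 \<le> (cmod (c*z+d))^2" by (simp add: power_mono)
    then show ?thesis using Hz[OF z] by linarith
  qed
  have Heq: "K + 2 * Re (\<beta> * z) = 0 \<longleftrightarrow> cmod (mob_apply m z) = 1" if z: "cmod z = 1" for z
  proof -
    have dz: "c*z+d \<noteq> 0" using MD_pole[OF m'] z by simp
    have "cmod (mob_apply m z) = 1 \<longleftrightarrow> cmod (a*z+b) = cmod (c*z+d)"
      using dz by (simp add: mm mob_apply_eq norm_divide divide_eq_eq)
    also have "\<dots> \<longleftrightarrow> (cmod (a*z+b))^2 = (cmod (c*z+d))^2"
      by (simp add: power2_eq_iff_nonneg)
    finally show ?thesis using Hz[OF z] by linarith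
  qed
  have z1: "K + 2 * Re (\<beta> * w1) = 0" and z2: "K + 2 * Re (\<beta> * w2) = 0"
    using Heq w1 w2 by auto
  show ?thesis
  proof (cases "\<beta> = 0")
    case True
    then have "K = 0" using z1 by simp
    then have "cmod (mob_apply m z) = 1" if "cmod z = 1" for z
      using Heq[OF that] True by simp
    then show ?thesis using surj_contra[OF m] by blast
  next
    case False
    define z0 where "z0 = - cnj \<beta> / of_real (cmod \<beta>)"
    have nb: "cmod \<beta> > 0" using False by simp
    have "cmod z0 = 1" using nb by (simp add: z0_def norm_divide)
    moreover have "\<beta> * z0 = of_real (- cmod \<beta>)"
    proof -
      have "\<beta> * z0 = - (\<beta> * cnj \<beta>) / of_real (cmod \<beta>)" by (simp add: z0_def)
      also have "\<dots> = - of_real ((cmod \<beta>)^2) / of_real (cmod \<beta>)"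
        by (simp only: complex_norm_square)
      also have "\<dots> = of_real (- cmod \<beta>)" using nb by (simp add: power2_eq_square)
      finally show ?thesis .
    qed
    ultimately have Kb: "K - 2 * cmod \<beta> \<ge> 0" using Hge[of z0] by simp
    have sol: "w = of_real (- cmod \<beta>) / \<beta>" if w: "cmod w = 1" "K + 2 * Re (\<beta> * w) = 0" for w
    proof -
      have n: "cmod (\<beta> * w) = cmod \<beta>" using w by (simp add: norm_mult)
      have "Re (\<beta> * w) \<ge> - cmod (\<beta> * w)" using abs_Re_le_cmod[of "\<beta> * w"] by linarith
      then have "Re (\<beta> * w) = - cmod (\<beta> * w)" using n w(2) Kb by linarith
      then have "\<beta> * w = of_real (- cmod \<beta>)" using re_eq_neg_cmod n by metis
      then show ?thesis using False by (simp add: field_simps)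
    qed
    show ?thesis using sol[OF w1(1) z1] sol[OF w2(1) z2] by simp
  qed
qed



lemma strict_bound:
  assumes hol: "G holomorphic_on ball 0 1" and cc: "continuous_on (cball 0 1) G"
    and lt: "\<And>w. cmod w \<le> 1 \<Longrightarrow> cmod (G w) < 1"
  shows "\<exists>s. 0 < s \<and> s < 1 \<and> (\<forall>z. cmod z < 1 \<longrightarrow>
            cmod (deriv G z) * (1 - (cmod z)^2) \<le> s * (1 - (cmod (G z))^2))"
proof -
  have "compact ((\<lambda>w. cmod (G w)) ` cball 0 1)"
    by (rule compact_continuous_image[OF continuous_on_norm[OF cc] compact_cball])
  then obtain M where M: "M \<in> (\<lambda>w. cmod (G w)) ` cball 0 1"
     "\<forall>t\<in>(\<lambda>w. cmod (G w)) ` cball 0 1. t \<le> M"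
    using compact_attains_sup[of "(\<lambda>w. cmod (G w)) ` cball 0 1"] by auto
  have M1: "M < 1" using M(1) lt by auto
  have Mb: "cmod (G w) \<le> M" if "cmod w \<le> 1" for w using M(2) that by auto
  define s where "s = (max M 0 + 1) / 2"
  have s: "0 < s" "s < 1" "M < s" using M1 by (auto simp: s_def)
  define h where "h = (\<lambda>z. G z / of_real s)"
  have hh: "h holomorphic_on ball 0 1" unfolding h_def using s
    by (auto intro!: holomorphic_intros hol)
  have hi: "cmod (h z) < 1" if "cmod z < 1" for z
  proof -
    have "cmod (G z) \<le> M" using Mb that by simp
    then show ?thesis using s by (simp add: h_def norm_divide)
  qed
  show ?thesis
  proof (intro exI conjI allI impI)
    show "0 < s" "s < 1" using s by auto
    fix z :: complex assume z: "cmod z < 1"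
    have "G field_differentiable at z"
      using hol z by (auto intro: holomorphic_on_imp_differentiable_at)
    then have dh: "deriv h z = deriv G z / of_real s" unfolding h_def by (rule deriv_cdivide_right)
    have sp: "cmod (deriv h z) * (1 - (cmod z)^2) \<le> 1 - (cmod (h z))^2"
      by (rule schwarz_pick[OF hh hi z])
    have e1: "cmod (deriv h z) = cmod (deriv G z) / s" using s by (simp add: dh norm_divide)
    have e2: "cmod (h z) = cmod (G z) / s" using s by (simp add: h_def norm_divide)
    define x where "x = (cmod (G z))^2"
    have x0: "x \<ge> 0" by (simp add: x_def)
    have "cmod (deriv G z) * (1 - (cmod z)^2) = s * (cmod (deriv h z) * (1 - (cmod z)^2))"
      using s e1 by simp
    also have "\<dots> \<le> s * (1 - (cmod (h z))^2)" using sp s by (simp add: mult_left_mono)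
    also have "\<dots> = s - x / s" using s by (simp add: e2 x_def power_divide field_simps power2_eq_square)
    also have "\<dots> \<le> s * (1 - x)"
    proof -
      have "s * s \<le> 1" using s by (simp add: mult_le_one less_imp_le)
      then have "(s * s) * x \<le> 1 * x" using x0 by (rule mult_right_mono)
      then have "s * x * s \<le> x" by (simp add: ac_simps)
      then have "s * x \<le> x / s" using s by (simp add: le_divide_eq)
      then show ?thesis by (simp add: algebra_simps)
    qed
    finally show "cmod (deriv G z) * (1 - (cmod z)^2) \<le> s * (1 - (cmod (G z))^2)"
      by (simp add: x_def)
  qed
qed


lemma W_step:
  assumes hF: "Fn holomorphic_on ball 0 1" and iF: "inj_on Fn (ball 0 1)"
    and hG: "G holomorphic_on ball 0 1" and iG: "\<And>z. cmod z < 1 \<Longrightarrow> cmod (G z) < 1"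
    and k: "\<kappa> \<ge> 0"
    and bd: "\<And>z. cmod z < 1 \<Longrightarrow> cmod (deriv G z) * (1 - (cmod z)^2) \<le> \<kappa> * (1 - (cmod (G z))^2)"
    and z1: "cmod z1 < 1" "Fn z1 = c0" and z2: "cmod z2 < 1" "Fn (G z2) = c0"
  shows "cmod (deriv (Fn \<circ> G) z2) * (1 - (cmod z2)^2) \<le> \<kappa> * (cmod (deriv Fn z1) * (1 - (cmod z1)^2))"
proof -
  have Gz: "G z2 = z1"
    using iF z1 z2 iG[OF z2(1)] by (auto simp: inj_on_def)
  have d1: "G field_differentiable at z2" using hG z2 by (auto intro: holomorphic_on_imp_differentiable_at)
  have d2: "Fn field_differentiable at (G z2)" using hF iG[OF z2(1)]
    by (auto intro: holomorphic_on_imp_differentiable_at)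
  have "deriv (Fn \<circ> G) z2 = deriv Fn (G z2) * deriv G z2" by (rule deriv_chain[OF d1 d2])
  then have "cmod (deriv (Fn \<circ> G) z2) * (1 - (cmod z2)^2)
      = cmod (deriv Fn z1) * (cmod (deriv G z2) * (1 - (cmod z2)^2))"
    by (simp add: Gz norm_mult)
  also have "\<dots> \<le> cmod (deriv Fn z1) * (\<kappa> * (1 - (cmod z1)^2))"
    using bd[OF z2(1)] Gz by (simp add: mult_left_mono)
  finally show ?thesis by (simp add: ac_simps)
qed

lemma W_lower:
  assumes hF: "Fn holomorphic_on ball 0 1" and iF: "inj_on Fn (ball 0 1)"
    and b: "ball c0 r \<subseteq> Fn ` ball 0 1" and r: "r > 0"
    and z1: "cmod z1 < 1" "Fn z1 = c0"
  shows "r \<le> cmod (deriv Fn z1) * (1 - (cmod z1)^2)"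
proof -
  obtain g where hg: "g holomorphic_on (Fn ` ball 0 1)"
      and dg: "\<And>z. z \<in> ball 0 1 \<Longrightarrow> deriv Fn z * deriv g (Fn z) = 1"
      and gF: "\<And>z. z \<in> ball 0 1 \<Longrightarrow> g (Fn z) = z"
    using holomorphic_has_inverse[OF hF open_ball iF] by blast
  have oF: "open (Fn ` ball 0 1)" by (rule open_mapping_thm3[OF hF open_ball iF])
  define A where "A = (\<lambda>u. c0 + of_real r * u)"
  have Ab: "A u \<in> Fn ` ball 0 1" if "cmod u < 1" for u
  proof -
    have "dist c0 (A u) < r" using that r by (simp add: A_def dist_norm norm_mult)
    then show ?thesis using b by auto
  qed
  define h where "h = g \<circ> A"
  have hA: "A holomorphic_on ball 0 1" unfolding A_def by (auto intro!: holomorphic_intros)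
  have hh: "h holomorphic_on ball 0 1"
    unfolding h_def by (rule holomorphic_on_compose_gen[OF hA hg]) (use Ab in auto)
  have hi: "cmod (h z) < 1" if zz: "cmod z < 1" for z
  proof -
    obtain v where v: "v \<in> ball 0 1" "A z = Fn v" using Ab[OF zz] by auto
    then show ?thesis using gF by (simp add: h_def)
  qed
  have sp: "cmod (deriv h 0) * (1 - (cmod (0::complex))^2) \<le> 1 - (cmod (h 0))^2"
    using schwarz_pick[OF hh hi, of 0] by simp
  have z1b: "z1 \<in> ball 0 1" using z1 by simp
  have h0: "h 0 = z1" using gF[OF z1b] z1 by (simp add: h_def A_def)
  have dA: "A field_differentiable at 0" unfolding A_def by (auto intro!: derivative_intros)
  have dgc: "g field_differentiable at (A 0)"
    using hg oF Ab[of 0] by (auto intro: holomorphic_on_imp_differentiable_at)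
  have "(A has_field_derivative of_real r) (at 0)" unfolding A_def
    by (rule derivative_eq_intros refl)+ simp
  then have dA0: "deriv A 0 = of_real r" by (rule DERIV_imp_deriv)
  have "deriv h 0 = deriv g (A 0) * of_real r"
    unfolding h_def using deriv_chain[OF dA dgc] dA0 by simp
  then have dh: "deriv h 0 = deriv g c0 * of_real r" by (simp add: A_def)
  have inv: "deriv Fn z1 * deriv g c0 = 1" using dg[OF z1b] z1 by simp
  then have nz: "deriv Fn z1 \<noteq> 0" by auto
  have "cmod (deriv g c0) = 1 / cmod (deriv Fn z1)"
    using inv nz by (metis divide_eq_eq mult.commute norm_divide norm_one)
  then have "r / cmod (deriv Fn z1) \<le> 1 - (cmod z1)^2"
    using sp r by (simp add: dh norm_mult h0)
  then show ?thesis using nz by (simp add: divide_le_eq mult.commute)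
qed


lemma mob_hol_ball: "m \<in> MD \<Longrightarrow> mob_apply m holomorphic_on ball 0 1"
  using holomorphic_on_subset[OF hol_U] MD_cball_U ball_subset_cball by blast

lemma mob_cont_cball: "m \<in> MD \<Longrightarrow> continuous_on (cball 0 1) (mob_apply m)"
  using holomorphic_on_imp_continuous_on[OF hol_U] MD_cball_U continuous_on_subset by blast

lemma F_props:
  assumes hf: "\<And>n. f n \<in> MD"
  shows "comp_seq f n holomorphic_on ball 0 1" "inj_on (comp_seq f n) (ball 0 1)"
    "continuous_on (cball 0 1) (comp_seq f n)" "inj_on (comp_seq f n) (cball 0 1)"
proof -
  have *: "open (Vs f n)" "cball 0 1 \<subseteq> Vs f n" "comp_seq f n holomorphic_on Vs f n"
    "inj_on (comp_seq f n) (Vs f n)" using Vs_props[OF hf, where n=n] by auto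
  show "comp_seq f n holomorphic_on ball 0 1"
    using holomorphic_on_subset[OF *(3)] *(2) ball_subset_cball by blast
  show "inj_on (comp_seq f n) (ball 0 1)"
    using inj_on_subset[OF *(4)] *(2) ball_subset_cball by blast
  show "continuous_on (cball 0 1) (comp_seq f n)"
    using continuous_on_subset[OF holomorphic_on_imp_continuous_on[OF *(3)] *(2)] .
  show "inj_on (comp_seq f n) (cball 0 1)"
    using inj_on_subset[OF *(4) *(2)] .
qed

lemma W_contra:
  assumes hf: "\<And>n. f n \<in> MD" and r: "r > 0"
    and disc: "\<And>n. cball c0 r \<subseteq> comp_seq f n ` cball 0 1"
    and B: "infinite B" and Bpq: "\<And>n. n \<in> B \<Longrightarrow> f n = p \<and> f (Suc n) = q"
    and strict: "\<And>w. cmod w \<le> 1 \<Longrightarrow> cmod (mob_apply p (mob_apply q w)) < 1"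
  shows False
proof -
  define F where "F = comp_seq f"
  have hF: "F n holomorphic_on ball 0 1" "inj_on (F n) (ball 0 1)" for n
    using F_props[OF hf] by (auto simp: F_def)
  have bin: "ball c0 r \<subseteq> F n ` ball 0 1" for n
  proof -
    have "ball c0 r = interior (cball c0 r)" by simp
    also have "\<dots> \<subseteq> interior (F n ` cball 0 1)" unfolding F_def by (rule interior_mono[OF disc])
    also have "\<dots> \<subseteq> F n ` ball 0 1" unfolding F_def by (rule interior_image[OF hf])
    finally show ?thesis .
  qed
  have ex: "\<exists>z. cmod z < 1 \<and> F n z = c0" for n
  proof -
    have "c0 \<in> F n ` ball 0 1" using bin[of n] r by auto
    then show ?thesis by auto
  qed
  define zz where "zz n = (SOME z. cmod z < 1 \<and> F n z = c0)" for n
  have zz: "cmod (zz n) < 1" "F n (zz n) = c0" for n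
    using someI_ex[OF ex[of n]] by (auto simp: zz_def)
  define W where "W n = cmod (deriv (F n) (zz n)) * (1 - (cmod (zz n))^2)" for n
  have low: "r \<le> W n" for n
    unfolding W_def by (rule W_lower[OF hF(1) hF(2) bin r zz(1) zz(2)])
  have mono1: "W (Suc n) \<le> W n" for n
  proof -
    have FS: "F (Suc n) = F n \<circ> mob_apply (f n)" by (simp add: F_def)
    have "cmod (deriv (F n \<circ> mob_apply (f n)) (zz (Suc n))) * (1 - (cmod (zz (Suc n)))^2)
        \<le> 1 * (cmod (deriv (F n) (zz n)) * (1 - (cmod (zz n))^2))"
    proof (rule W_step[OF hF(1) hF(2) mob_hol_ball[OF hf] MD_lt1[OF hf]])
      show "cmod (deriv (mob_apply (f n)) z) * (1 - (cmod z)^2) \<le> 1 * (1 - (cmod (mob_apply (f n) z))^2)"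
        if "cmod z < 1" for z
        using schwarz_pick[OF mob_hol_ball[OF hf] MD_lt1[OF hf] that] by simp
      show "F n (mob_apply (f n) (zz (Suc n))) = c0" using zz(2)[of "Suc n"] by (simp add: FS)
    qed (use zz in auto)
    then show ?thesis by (simp add: W_def FS)
  qed
  have monoN: "W n \<le> W N" if "N \<le> n" for n N
    using that
  proof (induction n rule: dec_induct)
    case base then show ?case by simp
  next
    case (step n) then show ?case using mono1[of n] by linarith
  qed
  define G where "G = mob_apply p \<circ> mob_apply q"
  obtain n0 where "n0 \<in> B" using B by (metis finite.emptyI ex_in_conv)
  then have pq: "p \<in> MD" "q \<in> MD" using Bpq hf by metis+
  have hG: "G holomorphic_on ball 0 1"
    unfolding G_def by (rule holomorphic_on_compose_gen[OF mob_hol_ball[OF pq(2)] mob_hol_ball[OF pq(1)]])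
      (use MD_lt1[OF pq(2)] in auto)
  have cG: "continuous_on (cball 0 1) G"
    unfolding G_def by (rule continuous_on_compose[OF mob_cont_cball[OF pq(2)], THEN continuous_on_subset])
      (use mob_cont_cball[OF pq(1)] MD_le1[OF pq(2)] in \<open>auto intro: continuous_on_subset\<close>)
  obtain s where s: "0 < s" "s < 1"
    and sb: "\<And>z. cmod z < 1 \<Longrightarrow> cmod (deriv G z) * (1 - (cmod z)^2) \<le> s * (1 - (cmod (G z))^2)"
    using strict_bound[OF hG cG] strict unfolding G_def by fastforce
  have iG: "cmod (G z) < 1" if "cmod z < 1" for z
    using MD_lt1[OF pq(1) MD_lt1[OF pq(2) that]] by (simp add: G_def)
  have step2: "W (Suc (Suc n)) \<le> s * W n" if nB: "n \<in> B" for n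
  proof -
    have FS: "F (Suc (Suc n)) = F n \<circ> G" using Bpq[OF nB] by (simp add: F_def G_def o_assoc)
    have "cmod (deriv (F n \<circ> G) (zz (Suc (Suc n)))) * (1 - (cmod (zz (Suc (Suc n))))^2)
        \<le> s * (cmod (deriv (F n) (zz n)) * (1 - (cmod (zz n))^2))"
    proof (rule W_step[OF hF(1) hF(2) hG iG])
      show "F n (G (zz (Suc (Suc n)))) = c0" using zz(2)[of "Suc (Suc n)"] by (simp add: FS)
    qed (use zz sb s in auto)
    then show ?thesis by (simp add: W_def FS)
  qed
  have W0: "W 0 \<le> 1"
  proof -
    have "deriv (F 0) (zz 0) = 1" by (simp add: F_def id_def)
    then show ?thesis by (simp add: W_def)
  qed
  have pw: "\<exists>N. W N \<le> s ^ m" for m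
  proof (induction m)
    case 0 then show ?case using W0 by auto
  next
    case (Suc m)
    then obtain N where N: "W N \<le> s ^ m" by auto
    obtain n where n: "n \<ge> N" "n \<in> B" using B unfolding infinite_nat_iff_unbounded_le by blast
    have "W (Suc (Suc n)) \<le> s * W n" by (rule step2[OF n(2)])
    also have "\<dots> \<le> s * W N" using monoN[OF n(1)] s by (simp add: mult_left_mono)
    also have "\<dots> \<le> s * s ^ m" using N s by (simp add: mult_left_mono)
    finally show ?case by auto
  qed
  obtain m where "s ^ m < r" using real_arch_pow_inv[OF r s(2)] by blast
  moreover obtain N where "W N \<le> s ^ m" using pw by blast
  ultimately show False using low[of N] by linarith
qed




theorem theorem1p1:
  fixes \<F> :: "mobius set" and f :: "nat \<Rightarrow> mobius"
  assumes "finite \<F>" and "\<F> \<subseteq> MD"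
    and "\<And>n. f n \<in> \<F>"
    and "limit_disc_type f"
  shows "limit_tangent_type f"
proof -
  have hf: "\<And>n. f n \<in> MD" using assms(2,3) by blast
  define F where "F = comp_seq f"
  obtain c0 r where r: "r > 0" and int: "(\<Inter>n\<in>{1..}. comp_seq f n ` cball 0 1) = cball c0 r"
    using assms(4) unfolding limit_disc_type_def by blast
  have disc: "cball c0 r \<subseteq> comp_seq f n ` cball 0 1" for n
  proof (cases "n = 0")
    case False
    then have "n \<in> {1..}" by simp
    then show ?thesis using int by blast
  next
    case True
    have "cball c0 r \<subseteq> comp_seq f 1 ` cball 0 1" using int by blast
    also have "\<dots> \<subseteq> cball 0 1" using MD_le1[OF hf] by auto
    also have "\<dots> = comp_seq f n ` cball 0 1" using True by simp
    finally show ?thesis .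
  qed
  define strictP where "strictP n \<longleftrightarrow>
     (\<forall>w. cmod w \<le> 1 \<longrightarrow> cmod (mob_apply (f n) (mob_apply (f (Suc n)) w)) < 1)" for n
  have fin: "finite {n. strictP n}"
  proof (rule ccontr)
    assume inf: "infinite {n. strictP n}"
    define g where "g n = (f n, f (Suc n))" for n
    have "g ` {n. strictP n} \<subseteq> \<F> \<times> \<F>" using assms(3) by (auto simp: g_def)
    then have "finite (g ` {n. strictP n})" using assms(1) finite_subset by blast
    then obtain a0 where a0: "a0 \<in> {n. strictP n}"
      and infB: "infinite {a \<in> {n. strictP n}. g a = g a0}"
      using pigeonhole_infinite[OF inf] by blast
    show False
    proof (rule W_contra[OF hf r disc infB])
      show "f n = f a0 \<and> f (Suc n) = f (Suc a0)" if "n \<in> {a \<in> {n. strictP n}. g a = g a0}" for n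
        using that by (simp add: g_def)
      show "cmod (mob_apply (f a0) (mob_apply (f (Suc a0)) w)) < 1" if "cmod w \<le> 1" for w
        using a0 that by (simp add: strictP_def)
    qed
  qed
  then obtain M where M: "\<forall>n\<in>{n. strictP n}. n \<le> M" unfolding finite_nat_set_iff_bounded_le by blast
  define N where "N = Suc M"
  have ns: "\<not> strictP n" if "n \<ge> N" for n using M that by (auto simp: N_def)
  have exw: "\<exists>w. cmod w \<le> 1 \<and> \<not> cmod (mob_apply (f n) (mob_apply (f (Suc n)) w)) < 1" if "n \<ge> N" for n
    using ns[OF that] by (auto simp: strictP_def)
  define ww where "ww n = (SOME w. cmod w \<le> 1 \<and> \<not> cmod (mob_apply (f n) (mob_apply (f (Suc n)) w)) < 1)" for n
  have wwp: "cmod (ww n) = 1 \<and> cmod (mob_apply (f (Suc n)) (ww n)) = 1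
      \<and> cmod (mob_apply (f n) (mob_apply (f (Suc n)) (ww n))) = 1" if "n \<ge> N" for n
  proof -
    have w: "cmod (ww n) \<le> 1" "\<not> cmod (mob_apply (f n) (mob_apply (f (Suc n)) (ww n))) < 1"
      using someI_ex[OF exw[OF that]] by (auto simp: ww_def)
    have 1: "cmod (mob_apply (f (Suc n)) (ww n)) \<le> 1" using MD_le1[OF hf w(1)] .
    have 2: "cmod (mob_apply (f n) (mob_apply (f (Suc n)) (ww n))) \<le> 1" using MD_le1[OF hf 1] .
    have 3: "\<not> cmod (mob_apply (f (Suc n)) (ww n)) < 1" using MD_lt1[OF hf] w(2) by blast
    have 4: "\<not> cmod (ww n) < 1" using MD_lt1[OF hf] 3 by blast
    show ?thesis using w 1 2 3 4 by linarith
  qed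
  have link: "ww n = mob_apply (f (Suc (Suc n))) (ww (Suc n))" if "n \<ge> N" for n
  proof (rule tangent_unique[OF hf[of "Suc n"]])
    show "cmod (ww n) = 1" "cmod (mob_apply (f (Suc n)) (ww n)) = 1" using wwp[OF that] by auto
    show "cmod (mob_apply (f (Suc (Suc n))) (ww (Suc n))) = 1"
      "cmod (mob_apply (f (Suc n)) (mob_apply (f (Suc (Suc n))) (ww (Suc n)))) = 1"
      using wwp[of "Suc n"] that by auto
  qed
  define p where "p = comp_seq f (N + 2) (ww N)"
  have pk: "comp_seq f (N + k + 2) (ww (N + k)) = p" for k
  proof (induction k)
    case 0 then show ?case by (simp add: p_def)
  next
    case (Suc k)
    have "comp_seq f (N + Suc k + 2) (ww (N + Suc k))
        = comp_seq f (N + k + 2) (mob_apply (f (Suc (Suc (N + k)))) (ww (Suc (N + k))))"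
      by (simp add: numeral_2_eq_2)
    also have "\<dots> = comp_seq f (N + k + 2) (ww (N + k))" using link[of "N + k"] by simp
    finally show ?case using Suc by simp
  qed
  show ?thesis unfolding limit_tangent_type_def
  proof (intro exI allI impI)
    fix n assume n: "N + 2 \<le> n"
    define k where "k = n - N - 2"
    have nk: "n = N + k + 2" using n by (simp add: k_def)
    have "cmod (ww (N + k)) = 1" using wwp[of "N + k"] by simp
    then have "comp_seq f n (ww (N + k)) \<in> frontier (comp_seq f n ` ball 0 1)"
      by (rule frontier_point[OF hf])
    then show "p \<in> frontier (comp_seq f n ` ball 0 1)" using pk[of k] nk by simp
  qed
qed

end
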